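(* Let $f:[0,\infty)\to[0,\infty)$ be continuously differentiable with $f>0$ on $[t_0,\infty)$ for some $t_0\ge0$ and $f\in C^2([t_0,\infty))$, let $g=\log f$ on $[t_0,\infty)$, and assume condition (H1) of the context with $q=1$. Let $(t_n),(x_n)\subset(0,\infty)$ and $x_0\in[0,\infty)$ satisfy $t_n\to\infty$ and $x_n\to x_0$. Then $$\lim_{n\to\infty}\frac{g\big(t_n-x_n\frac{g(t_n)}{g'(t_n)}\big)}{g(t_n)}=e^{-x_0}=\lim_{n\to\infty}\frac{g'\big(t_n-x_n\frac{g(t_n)}{g'(t_n)}\big)}{g'(t_n)}.$$
   Context: Condition (H1): (i) $g'(t)>0$ and $g''(t)>0$ for all $t\ge t_0$, and there is a pair $(q,p)$ with either $q=1$ and $p\in(0,\infty]$, or $q\in(1,\infty)$ and $p\in(0,\infty)$, such that $\lim_{t\to\infty}\frac{g'(t)^2}{g(t)g''(t)}=q$ and $\lim_{t\to\infty}\frac{tg'(t)}{g(t)}=p$; (ii) if $q=1$, then $tg'(t)/g(t)$ is nondecreasing on $[t_0,\infty)$ and there exist $k\in\mathbb{N}$ and $\hat g\in C^2([t_0,\infty))$ with $f=\exp_k\circ\hat g$ and $\hat g'/\hat g$ nonincreasing on $[t_0,\infty)$ ($\exp_1=\exp$, $\exp_k=\exp_{k-1}\circ\exp$). *)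

theory Defs
  imports Complex_Main
begin

definition iexp :: "nat \<Rightarrow> real \<Rightarrow> real" where
  "iexp k = (exp ^^ k)"

end

theory Submission
  imports Defs "HOL-Analysis.Analysis"
begin

theorem lemma2p9:
  fixes f f1 f2 g g1 g2 :: "real \<Rightarrow> real"
    and t0 :: real and t x :: "nat \<Rightarrow> real" and x0 :: real
  assumes t0: "t0 \<ge> 0"
    and f_nonneg: "\<forall>s\<ge>0. f s \<ge> 0"
    and f_C1: "\<forall>s\<ge>0. (f has_real_derivative f1 s) (at s within {0..})"
    and f1_cont: "continuous_on {0..} f1"
    and f_pos: "\<forall>s\<ge>t0. f s > 0"
    and f_C2: "\<forall>s\<ge>t0. (f1 has_real_derivative f2 s) (at s within {t0..})"
    and f2_cont: "continuous_on {t0..} f2"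
    and g_def: "g = (\<lambda>s. ln (f s))"
    and g_d1: "\<forall>s\<ge>t0. (g has_real_derivative g1 s) (at s within {t0..})"
    and g_d2: "\<forall>s\<ge>t0. (g1 has_real_derivative g2 s) (at s within {t0..})"
    and H1_pos: "\<forall>s\<ge>t0. g1 s > 0 \<and> g2 s > 0"
    and H1_q: "((\<lambda>s. (g1 s)\<^sup>2 / (g s * g2 s)) \<longlongrightarrow> 1) at_top"
    and H1_p: "(\<exists>p>0. ((\<lambda>s. s * g1 s / g s) \<longlongrightarrow> p) at_top)
               \<or> filterlim (\<lambda>s. s * g1 s / g s) at_top at_top"
    and H1_mono: "mono_on {t0..} (\<lambda>s. s * g1 s / g s)"
    and H1_ghat: "\<exists>k::nat. k \<ge> 1 \<and> (\<exists>gh h1 h2 :: real \<Rightarrow> real.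
                    (\<forall>s\<ge>t0. (gh has_real_derivative h1 s) (at s within {t0..}))
                  \<and> (\<forall>s\<ge>t0. (h1 has_real_derivative h2 s) (at s within {t0..}))
                  \<and> continuous_on {t0..} h2
                  \<and> (\<forall>s\<ge>t0. f s = iexp k (gh s))
                  \<and> antimono_on {t0..} (\<lambda>s. h1 s / gh s))"
    and t_pos: "\<forall>n. t n > 0" and x_pos: "\<forall>n. x n > 0" and x0: "x0 \<ge> 0"
    and t_lim: "filterlim t at_top sequentially"
    and x_lim: "x \<longlonglongrightarrow> x0"
  shows "(\<lambda>n. g (t n - x n * g (t n) / g1 (t n)) / g (t n)) \<longlonglongrightarrow> exp (- x0)
       \<and> (\<lambda>n. g1 (t n - x n * g (t n) / g1 (t n)) / g1 (t n)) \<longlonglongrightarrow> exp (- x0)"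
proof -
  have dg: "DERIV g s :> g1 s" and dg1: "DERIV g1 s :> g2 s" if "s > t0" for s
  proof -
    have e: "at s within {t0..} = at s"
      by (rule at_within_interior) (use that in simp)
    show "DERIV g s :> g1 s" using g_d1 that e by (metis less_imp_le)
    show "DERIV g1 s :> g2 s" using g_d2 that e by (metis less_imp_le)
  qed
  define r where "r s = (g1 s)\<^sup>2 / (g s * g2 s)" for s
  have "\<forall>\<^sub>F s in at_top. r s > 1/2"
    using order_tendstoD(1)[OF H1_q[folded r_def], of "1/2"] by simp
  moreover have "\<forall>\<^sub>F s in at_top. s > t0" by (rule eventually_gt_at_top)
  ultimately have "\<forall>\<^sub>F s in at_top. s > t0 \<and> g s > 0"
  proof eventually_elim
    case (elim s)
    then have p: "g1 s > 0" "g2 s > 0" using H1_pos by auto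
    have "r s > 0" using elim by simp
    then have "g s * g2 s > 0" unfolding r_def using p
      by (simp add: zero_less_divide_iff)
    then show ?case using p elim by (simp add: zero_less_mult_iff)
  qed
  then obtain T where T: "\<And>s. s \<ge> T \<Longrightarrow> s > t0 \<and> g s > 0"
    by (auto simp: eventually_at_top_linorder)
  define u where "u s = g s / g1 s" for s
  define u' where "u' s = 1 - g s * g2 s / (g1 s)\<^sup>2" for s
  have Tp: "s > t0" "g s > 0" "g1 s > 0" "g2 s > 0" "u s > 0" if "s \<ge> T" for s
    using T[OF that] H1_pos unfolding u_def by auto
  have du: "DERIV u s :> u' s" if "s \<ge> T" for s
  proof -
    have "DERIV u s :> (g1 s * g1 s - g s * g2 s) / (g1 s * g1 s)"
      unfolding u_def using dg[OF Tp(1)[OF that]] dg1[OF Tp(1)[OF that]] Tp(3)[OF that]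
      by (intro DERIV_divide) auto
    moreover have "(g1 s * g1 s - g s * g2 s) / (g1 s * g1 s) = u' s"
      unfolding u'_def using Tp(3)[OF that] by (simp add: field_simps power2_eq_square)
    ultimately show ?thesis by simp
  qed
  have u'_lim: "(u' \<longlongrightarrow> 0) at_top"
  proof -
    have "((\<lambda>s. 1 - 1 / r s) \<longlongrightarrow> 1 - 1 / 1) at_top"
      by (intro tendsto_intros H1_q[folded r_def]) simp
    moreover have "(\<lambda>s. 1 - 1 / r s) = u'"
      unfolding u'_def r_def by (auto simp: fun_eq_iff)
    ultimately show ?thesis by simp
  qed
  have u_o: "((\<lambda>s. u s / s) \<longlongrightarrow> 0) at_top"
  proof (rule lhospital_at_top_at_top[where f' = u' and g' = "\<lambda>_. 1"])
    show "filterlim (\<lambda>s. s) at_top at_top" by (rule filterlim_ident)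
    show "\<forall>\<^sub>F s in at_top. (1::real) \<noteq> 0" by simp
    show "\<forall>\<^sub>F s in at_top. DERIV u s :> u' s"
      using eventually_ge_at_top[of T] by eventually_elim (rule du)
    show "\<forall>\<^sub>F s in at_top. DERIV (\<lambda>s. s) s :> 1"
      by (simp add: DERIV_ident)
    show "((\<lambda>s. u' s / 1) \<longlongrightarrow> 0) at_top" using u'_lim by simp
  qed
  define \<tau> where "\<tau> n = t n - x n * u (t n)" for n
  have tau_eq: "t n - x n * g (t n) / g1 (t n) = \<tau> n" for n
    unfolding \<tau>_def u_def by simp
  have tau_lim: "filterlim \<tau> at_top sequentially"
  proof -
    have a: "((\<lambda>n. u (t n) / t n) \<longlongrightarrow> 0) sequentially"
      using filterlim_compose[OF u_o t_lim] by simp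
    have "((\<lambda>n. 1 - x n * (u (t n) / t n)) \<longlongrightarrow> 1 - x0 * 0) sequentially"
      by (intro tendsto_intros x_lim a)
    then have "filterlim (\<lambda>n. (1 - x n * (u (t n) / t n)) * t n) at_top sequentially"
      by (intro filterlim_tendsto_pos_mult_at_top t_lim) auto
    moreover have "(\<lambda>n. (1 - x n * (u (t n) / t n)) * t n) = \<tau>"
      unfolding \<tau>_def
    proof (rule ext)
      fix n have "t n > 0" using t_pos by simp
      then show "(1 - x n * (u (t n) / t n)) * t n = t n - x n * u (t n)"
        by (simp add: field_simps)
    qed
    ultimately show ?thesis by simp
  qed
  have evT: "\<forall>\<^sub>F n in sequentially. \<tau> n \<ge> T \<and> t n \<ge> T \<and> \<tau> n < t n"
  proof -
    have "\<forall>\<^sub>F n in sequentially. \<tau> n \<ge> T"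
      using tau_lim by (simp add: filterlim_at_top)
    moreover have "\<forall>\<^sub>F n in sequentially. t n \<ge> T"
      using t_lim by (simp add: filterlim_at_top)
    ultimately show ?thesis
    proof eventually_elim
      case (elim n)
      then have "u (t n) > 0" using Tp by auto
      then have "x n * u (t n) > 0" using x_pos by simp
      then show ?case using elim unfolding \<tau>_def by simp
    qed
  qed
  have L: "((\<lambda>n. u (\<eta> n) / u (t n)) \<longlongrightarrow> 1) sequentially"
    if eta: "\<forall>\<^sub>F n in sequentially. \<tau> n \<le> \<eta> n \<and> \<eta> n \<le> t n" for \<eta>
  proof -
    define P where "P n z \<longleftrightarrow> \<eta> n \<le> z \<and> z \<le> t n \<and> u (t n) - u (\<eta> n) = (t n - \<eta> n) * u' z" for n z
    define \<xi> where "\<xi> n = (SOME z. P n z)" for n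
    have ev: "\<forall>\<^sub>F n in sequentially. \<tau> n \<le> \<eta> n \<and> \<eta> n \<le> t n \<and> \<tau> n \<ge> T \<and> P n (\<xi> n)"
      using eta evT
    proof eventually_elim
      case (elim n)
      have "\<exists>z. P n z"
      proof (cases "\<eta> n < t n")
        case True
        have "\<exists>z. \<eta> n < z \<and> z < t n \<and> u (t n) - u (\<eta> n) = (t n - \<eta> n) * u' z"
          by (rule MVT2[OF True]) (rule du, use elim in auto)
        then show ?thesis unfolding P_def by (meson less_imp_le)
      next
        case False
        then have "\<eta> n = t n" using elim by simp
        then show ?thesis unfolding P_def by (intro exI[of _ "t n"]) simp
      qed
      then have "P n (\<xi> n)" unfolding \<xi>_def by (rule someI_ex)
      then show ?case using elim by simp
    qed
    have "filterlim \<xi> at_top sequentially"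
      by (rule filterlim_at_top_mono[OF tau_lim]) (use ev in \<open>eventually_elim, auto simp: P_def\<close>)
    then have xl: "((\<lambda>n. u' (\<xi> n)) \<longlongrightarrow> 0) sequentially"
      using filterlim_compose[OF u'_lim] by blast
    have "((\<lambda>n. (t n - \<eta> n) / u (t n) * u' (\<xi> n)) \<longlongrightarrow> 0) sequentially"
    proof (rule Lim_null_comparison)
      show "((\<lambda>n. x n * \<bar>u' (\<xi> n)\<bar>) \<longlongrightarrow> 0) sequentially"
        using tendsto_mult[OF x_lim tendsto_rabs[OF xl]] by simp
      show "\<forall>\<^sub>F n in sequentially. norm ((t n - \<eta> n) / u (t n) * u' (\<xi> n)) \<le> x n * \<bar>u' (\<xi> n)\<bar>"
        using ev evT
      proof eventually_elim
        case (elim n)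
        have up: "u (t n) > 0" using Tp elim by auto
        have "t n - \<eta> n \<le> x n * u (t n)" using elim unfolding \<tau>_def by simp
        then have "(t n - \<eta> n) / u (t n) \<le> x n" using up by (simp add: divide_le_eq)
        moreover have "(t n - \<eta> n) / u (t n) \<ge> 0" using up elim by simp
        ultimately have "\<bar>(t n - \<eta> n) / u (t n)\<bar> * \<bar>u' (\<xi> n)\<bar> \<le> x n * \<bar>u' (\<xi> n)\<bar>"
          by (intro mult_right_mono) auto
        then show ?case by (simp only: real_norm_def abs_mult)
      qed
    qed
    then have "((\<lambda>n. 1 - (t n - \<eta> n) / u (t n) * u' (\<xi> n)) \<longlongrightarrow> 1 - 0) sequentially"
      by (intro tendsto_intros)
    moreover have "\<forall>\<^sub>F n in sequentially. 1 - (t n - \<eta> n) / u (t n) * u' (\<xi> n) = u (\<eta> n) / u (t n)"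
      using ev evT
    proof eventually_elim
      case (elim n)
      have up: "u (t n) > 0" using Tp elim by auto
      from elim have "u (t n) - u (\<eta> n) = (t n - \<eta> n) * u' (\<xi> n)" unfolding P_def by simp
      then show ?case using up by (simp add: field_simps)
    qed
    ultimately show ?thesis by (simp add: tendsto_cong)
  qed
  define Q where "Q n z \<longleftrightarrow> \<tau> n < z \<and> z < t n \<and> ln (g (t n)) - ln (g (\<tau> n)) = (t n - \<tau> n) * (g1 z / g z)" for n z
  define \<eta> where "\<eta> n = (SOME z. Q n z)" for n
  have evQ: "\<forall>\<^sub>F n in sequentially. Q n (\<eta> n)"
    using evT
  proof eventually_elim
    case (elim n)
    have "\<exists>z. Q n z" unfolding Q_def
    proof (rule MVT2)
      show "\<tau> n < t n" using elim by simp
      fix s assume s: "\<tau> n \<le> s" "s \<le> t n"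
      then have "s \<ge> T" using elim by simp
      then show "DERIV (\<lambda>s. ln (g s)) s :> g1 s / g s"
        using Tp dg by (auto intro!: derivative_eq_intros)
    qed
    then show ?case unfolding \<eta>_def by (rule someI_ex)
  qed
  have Leta: "((\<lambda>n. u (\<eta> n) / u (t n)) \<longlongrightarrow> 1) sequentially"
    by (rule L) (use evQ in \<open>eventually_elim, auto simp: Q_def\<close>)
  have "((\<lambda>n. - (x n / (u (\<eta> n) / u (t n)))) \<longlongrightarrow> - (x0 / 1)) sequentially"
    by (intro tendsto_intros x_lim Leta) simp
  then have "((\<lambda>n. exp (- (x n / (u (\<eta> n) / u (t n))))) \<longlongrightarrow> exp (- x0)) sequentially"
    using tendsto_exp[OF \<open>((\<lambda>n. - (x n / (u (\<eta> n) / u (t n)))) \<longlongrightarrow> - (x0 / 1)) sequentially\<close>] by simp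
  moreover have "\<forall>\<^sub>F n in sequentially. exp (- (x n / (u (\<eta> n) / u (t n)))) = g (\<tau> n) / g (t n)"
    using evQ evT
  proof eventually_elim
    case (elim n)
    have pos: "g (\<tau> n) > 0" "g (t n) > 0" "u (t n) > 0" "u (\<eta> n) > 0"
      "g (\<eta> n) > 0" "g1 (\<eta> n) > 0" "g1 (t n) > 0"
      using Tp elim unfolding Q_def by auto
    have "x n / (u (\<eta> n) / u (t n)) = (t n - \<tau> n) * (g1 (\<eta> n) / g (\<eta> n))"
      unfolding \<tau>_def u_def using pos by (simp add: field_simps)
    also have "\<dots> = ln (g (t n)) - ln (g (\<tau> n))" using elim unfolding Q_def by simp
    finally have "- (x n / (u (\<eta> n) / u (t n))) = ln (g (\<tau> n)) - ln (g (t n))" by simp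
    then show ?case using pos by (simp add: exp_diff)
  qed
  ultimately have lim1: "(\<lambda>n. g (\<tau> n) / g (t n)) \<longlonglongrightarrow> exp (- x0)"
    by (simp add: tendsto_cong)
  have Ltau: "((\<lambda>n. u (\<tau> n) / u (t n)) \<longlongrightarrow> 1) sequentially"
    by (rule L) (use evT in \<open>eventually_elim, auto\<close>)
  have "((\<lambda>n. g (\<tau> n) / g (t n) * (1 / (u (\<tau> n) / u (t n)))) \<longlongrightarrow> exp (- x0) * (1 / 1)) sequentially"
    by (intro tendsto_intros lim1 Ltau) simp
  moreover have "\<forall>\<^sub>F n in sequentially. g (\<tau> n) / g (t n) * (1 / (u (\<tau> n) / u (t n))) = g1 (\<tau> n) / g1 (t n)"
    using evT
  proof eventually_elim
    case (elim n)
    have pos: "g (\<tau> n) > 0" "g (t n) > 0" "g1 (\<tau> n) > 0" "g1 (t n) > 0"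
      using Tp elim by auto
    then show ?case unfolding u_def by (simp add: field_simps)
  qed
  ultimately have lim2: "(\<lambda>n. g1 (\<tau> n) / g1 (t n)) \<longlonglongrightarrow> exp (- x0)"
    by (simp add: tendsto_cong)
  show ?thesis unfolding tau_eq using lim1 lim2 by simp
qed

end
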